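(* Let $\mathcal B$ be a finite set of complex numbers $\beta$ with $\mathrm{Re}(\beta)\ge\gamma\ge1$, let $s>0$, and $\theta_\beta(z)=(z+\beta)^{-1}$. Let $H$ be a bounded, mildly regular open subset of $\mathbb C$ with $H\supset\{z:|z-1/(2\gamma)|<1/(2\gamma)\}$ and $\mathrm{Re}(z)>0$ for all $z\in H$, and let $v_s$ be the strictly positive eigenvector (unique up to normalization) of $\Lambda_s:C^m(\bar H)\to C^m(\bar H)$, $(\Lambda_sf)(z)=\sum_{\beta\in\mathcal B}|z+\beta|^{-2s}f(\theta_\beta(z))$, $m\ge1$. Then for all $z_0,z_1\in H$, $$v_s(z_0)\le v_s(z_1)\exp\big[(\sqrt5\,s/\gamma)|z_1-z_0|\big].$$
   Context: $H$ is mildly regular if there exist $\eta>0$, $M\ge1$ such that whenever $x,y\in H$ with $\|x-y\|<\eta$ there is a Lipschitz $\psi:[0,1]\to H$ with $\psi(0)=x$, $\psi(1)=y$, $\int_0^1\|\psi'(t)\|dt\le M\|x-y\|$. $C^m(\bar H)$ is the space of real $C^m$ functions on $H$ whose partial derivatives of order $\le m$ extend continuously to $\bar H$. *)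

theory Defs
  imports "HOL-Analysis.Analysis"
begin

definition mildly_regular :: "complex set \<Rightarrow> bool" where
  "mildly_regular H \<longleftrightarrow>
     (\<exists>\<eta>>0. \<exists>M\<ge>1. \<forall>x\<in>H. \<forall>y\<in>H. norm (x - y) < \<eta> \<longrightarrow>
        (\<exists>\<psi> :: real \<Rightarrow> complex. (\<exists>L. L-lipschitz_on {0..1} \<psi>) \<and> \<psi> ` {0..1} \<subseteq> H \<and>
            \<psi> 0 = x \<and> \<psi> 1 = y \<and>
            (\<exists>I. ((\<lambda>t. norm (vector_derivative \<psi> (at t))) has_integral I) {0..1} \<and>
                 I \<le> M * norm (x - y))))"

definition extends_cont :: "complex set \<Rightarrow> (complex \<Rightarrow> real) \<Rightarrow> bool" where
  "extends_cont H f \<longleftrightarrow> (\<exists>g. continuous_on (closure H) g \<and> (\<forall>z\<in>H. g z = f z))"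

text \<open>C^m(closure H): real C^m functions on H (H viewed as open subset of R^2, partial
  derivatives in the directions 1 and i) whose partial derivatives of order \<le> m extend
  continuously to the closure.\<close>
fun Cm_bar :: "nat \<Rightarrow> complex set \<Rightarrow> (complex \<Rightarrow> real) \<Rightarrow> bool" where
  "Cm_bar 0 H f = (continuous_on H f \<and> extends_cont H f)"
| "Cm_bar (Suc m) H f = (Cm_bar 0 H f \<and> f differentiable_on H \<and>
      Cm_bar m H (\<lambda>z. frechet_derivative f (at z) 1) \<and>
      Cm_bar m H (\<lambda>z. frechet_derivative f (at z) \<i>))"

definition strictly_pos_bar :: "complex set \<Rightarrow> (complex \<Rightarrow> real) \<Rightarrow> bool" where
  "strictly_pos_bar H f \<longleftrightarrow>
     (\<exists>g. continuous_on (closure H) g \<and> (\<forall>z\<in>H. g z = f z) \<and> (\<forall>z\<in>closure H. g z > 0))"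

definition Lambda_op :: "complex set \<Rightarrow> real \<Rightarrow> (complex \<Rightarrow> real) \<Rightarrow> complex \<Rightarrow> real" where
  "Lambda_op B s f z = (\<Sum>\<beta>\<in>B. cmod (z + \<beta>) powr (-2 * s) * f (inverse (z + \<beta>)))"

end

theory Submission
  imports Defs
begin

lemma inv_re_pos: "Re u > 0 \<Longrightarrow> Re (inverse u) > 0"
  by (simp add: Re_inverse add_pos_nonneg sum_power2_gt_zero_iff divide_pos_pos)

lemma norm_inv_le: "Re u \<ge> g \<Longrightarrow> g > 0 \<Longrightarrow> cmod (inverse u) \<le> 1/g"
proof -
  assume a: "Re u \<ge> g" "g > 0"
  have "g \<le> cmod u" using a complex_Re_le_cmod[of u] by linarith
  then have "inverse (cmod u) \<le> inverse g" using a by (intro le_imp_inverse_le) auto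
  then show ?thesis by (simp add: norm_inverse divide_inverse)
qed

lemma inv_diff_le:
  assumes "Re x \<ge> g" "Re y \<ge> g" "g > 0"
  shows "cmod (inverse x - inverse y) \<le> cmod (x - y) / g^2"
proof -
  have gx: "g \<le> cmod x" using assms complex_Re_le_cmod[of x] by linarith
  have gy: "g \<le> cmod y" using assms complex_Re_le_cmod[of y] by linarith
  have x0: "x \<noteq> 0" using gx assms by auto
  have y0: "y \<noteq> 0" using gy assms by auto
  have "inverse x - inverse y = (y - x) / (x * y)" using x0 y0 by (simp add: field_simps)
  hence "cmod (inverse x - inverse y) = cmod (x - y) / (cmod x * cmod y)"
    by (simp add: norm_divide norm_mult norm_minus_commute)
  also have "\<dots> \<le> cmod (x - y) / g^2"
  proof (rule divide_left_mono)
    show "g^2 \<le> cmod x * cmod y" using gx gy assms by (auto simp: power2_eq_square intro: mult_mono)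
    show "0 < cmod x * cmod y * g^2" using gx gy assms by (intro mult_pos_pos) auto
  qed simp
  finally show ?thesis .
qed

lemma inv_in_disk:
  assumes "Re u > g" "g > 0"
  shows "inverse u \<in> ball (complex_of_real (1/(2*g))) (1/(2*g))"
proof -
  have u0: "u \<noteq> 0" using assms by auto
  have "cmod (of_real (2*g) - u) < cmod u"
  proof -
    have "(cmod (of_real (2*g) - u))^2 = (2*g - Re u)^2 + (Im u)^2"
      by (simp add: cmod_power2)
    also have "\<dots> < (Re u)^2 + (Im u)^2" using assms by (simp add: power2_eq_square algebra_simps)
    also have "\<dots> = (cmod u)^2" by (simp add: cmod_power2)
    finally have "(cmod (of_real (2*g) - u))^2 < (cmod u)^2" .
    thus ?thesis by (simp add: power_less_imp_less_base)
  qed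
  moreover have "complex_of_real (1/(2*g)) - inverse u = (u - of_real (2*g)) / (of_real (2*g) * u)"
    using u0 assms by (simp add: field_simps)
  ultimately have "cmod (complex_of_real (1/(2*g)) - inverse u) < 1/(2*g)"
    using u0 assms by (simp add: norm_divide norm_mult divide_simps norm_minus_commute)
  thus ?thesis by (simp add: dist_norm)
qed

fun thw :: "complex list \<Rightarrow> complex \<Rightarrow> complex" where
  "thw [] z = z"
| "thw (b#bs) z = thw bs (inverse (z + b))"

fun Wgt :: "real \<Rightarrow> complex list \<Rightarrow> complex \<Rightarrow> real" where
  "Wgt s [] z = 1"
| "Wgt s (b#bs) z = cmod (z + b) powr (-2 * s) * Wgt s bs (inverse (z + b))"

lemma Wt_nonneg: "Wgt s bs z \<ge> 0"
  by (induction bs arbitrary: z) auto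

lemma thw_in:
  assumes "\<forall>\<beta>\<in>B. Re \<beta> \<ge> \<gamma>" "\<gamma> \<ge> 1"
    and "ball (complex_of_real (1 / (2 * \<gamma>))) (1 / (2 * \<gamma>)) \<subseteq> H"
    and "\<forall>z\<in>H. Re z > 0"
  shows "z \<in> H \<Longrightarrow> set bs \<subseteq> B \<Longrightarrow> thw bs z \<in> H"
proof (induction bs arbitrary: z)
  case Nil then show ?case by simp
next
  case (Cons b bs)
  have "Re (z + b) > \<gamma>" using Cons.prems assms by force
  hence "inverse (z + b) \<in> H" using inv_in_disk[of \<gamma> "z+b"] assms by auto
  then show ?case using Cons by simp
qed

lemma words_Suc: "{bs. set bs \<subseteq> B \<and> length bs = Suc n} =
   (\<lambda>(b,bs). b#bs) ` (B \<times> {bs. set bs \<subseteq> B \<and> length bs = n})"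
proof (rule set_eqI, rule iffI)
  fix x assume "x \<in> {bs. set bs \<subseteq> B \<and> length bs = Suc n}"
  then obtain a y where "x = a # y" "a \<in> B" "set y \<subseteq> B" "length y = n"
    by (cases x) auto
  then show "x \<in> (\<lambda>(b,bs). b#bs) ` (B \<times> {bs. set bs \<subseteq> B \<and> length bs = n})"
    by (auto simp: image_iff)
qed auto

lemma eigen_iter:
  assumes "\<forall>\<beta>\<in>B. Re \<beta> \<ge> \<gamma>" "\<gamma> \<ge> 1"
    and "ball (complex_of_real (1 / (2 * \<gamma>))) (1 / (2 * \<gamma>)) \<subseteq> H"
    and "\<forall>z\<in>H. Re z > 0"
    and "\<forall>z\<in>H. Lambda_op B s v z = lam * v z"
  shows "z \<in> H \<Longrightarrow> lam^n * v z = (\<Sum>bs\<in>{bs. set bs \<subseteq> B \<and> length bs = n}. Wgt s bs z * v (thw bs z))"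
proof (induction n arbitrary: z)
  case 0
  have "{bs. set bs \<subseteq> B \<and> length bs = 0} = {[]}" by auto
  then show ?case by simp
next
  case (Suc n)
  have inH: "\<And>b. b \<in> B \<Longrightarrow> inverse (z + b) \<in> H"
  proof -
    fix b assume "b \<in> B"
    have "Re (z + b) > \<gamma>" using Suc.prems assms \<open>b \<in> B\<close> by force
    thus "inverse (z + b) \<in> H" using inv_in_disk[of \<gamma> "z+b"] assms by auto
  qed
  have "lam^Suc n * v z = lam^n * Lambda_op B s v z" using assms Suc.prems by simp
  also have "\<dots> = (\<Sum>b\<in>B. cmod (z + b) powr (-2 * s) * (lam^n * v (inverse (z + b))))"
    by (simp add: Lambda_op_def sum_distrib_left mult.left_commute)
  also have "\<dots> = (\<Sum>b\<in>B. cmod (z + b) powr (-2 * s) *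
      (\<Sum>bs\<in>{bs. set bs \<subseteq> B \<and> length bs = n}. Wgt s bs (inverse (z + b)) * v (thw bs (inverse (z + b)))))"
    using Suc.IH inH by simp
  also have "\<dots> = (\<Sum>b\<in>B. \<Sum>bs\<in>{bs. set bs \<subseteq> B \<and> length bs = n}. Wgt s (b#bs) z * v (thw (b#bs) z))"
    by (simp add: sum_distrib_left mult.assoc)
  also have "\<dots> = (\<Sum>(b,bs)\<in>B \<times> {bs. set bs \<subseteq> B \<and> length bs = n}. Wgt s (b#bs) z * v (thw (b#bs) z))"
    by (rule sum.cartesian_product)
  also have "\<dots> = (\<Sum>bs\<in>{bs. set bs \<subseteq> B \<and> length bs = Suc n}. Wgt s bs z * v (thw bs z))"
    unfolding words_Suc by (subst sum.reindex) (auto simp: inj_on_def split_def)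
  finally show ?case .
qed

lemma Wt_rep:
  assumes "\<forall>\<beta>\<in>B. Re \<beta> \<ge> \<gamma>" "\<gamma> \<ge> 1"
  shows "bs \<noteq> [] \<Longrightarrow> set bs \<subseteq> B \<Longrightarrow> \<exists>c p. c > 0 \<and> Re p \<le> -\<gamma> \<and>
     (\<forall>z. Re z \<ge> 0 \<longrightarrow> Wgt s bs z = c * cmod (z - p) powr (-2 * s))"
proof (induction bs)
  case Nil then show ?case by simp
next
  case (Cons b bs)
  have bB: "b \<in> B" using Cons.prems by simp
  show ?case
  proof (cases "bs = []")
    case True
    show ?thesis
      by (rule exI[of _ 1], rule exI[of _ "-b"]) (use True bB assms in auto)
  next
    case False
    then obtain c p where cp: "c > 0" "Re p \<le> -\<gamma>"
      "\<forall>z. Re z \<ge> 0 \<longrightarrow> Wgt s bs z = c * cmod (z - p) powr (-2 * s)"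
      using Cons by auto
    have p0: "p \<noteq> 0" using cp assms by auto
    define p' where "p' = inverse p - b"
    have "Re (inverse p) \<le> 0" using cp(2) assms
      by (simp add: Re_inverse divide_nonpos_nonneg)
    hence rp': "Re p' \<le> -\<gamma>" using bB assms by (auto simp: p'_def)
    show ?thesis
    proof (intro exI conjI allI impI)
      show "c * cmod p powr (-2 * s) > 0" using cp p0 by simp
      show "Re p' \<le> -\<gamma>" by fact
      fix z :: complex assume z: "Re z \<ge> 0"
      have zb: "Re (z + b) \<ge> \<gamma>" using z bB assms by auto
      have zb0: "z + b \<noteq> 0"
      proof
        assume "z + b = 0" hence "Re (z + b) = 0" by simp
        with zb assms show False by simp
      qed
      have "Re (inverse (z + b)) \<ge> 0" using inv_re_pos[of "z+b"] zb assms by auto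
      hence "Wgt s (b#bs) z = cmod (z + b) powr (-2 * s) * (c * cmod (inverse (z + b) - p) powr (-2 * s))"
        using cp by simp
      also have "\<dots> = c * (cmod (z + b) * cmod (inverse (z + b) - p)) powr (-2 * s)"
        by (simp add: powr_mult)
      also have "(z + b) * (inverse (z + b) - p) = - p * (z - p')"
        using zb0 p0 by (simp add: p'_def field_simps)
      hence "cmod (z + b) * cmod (inverse (z + b) - p) = cmod p * cmod (z - p')"
        by (metis norm_minus_cancel norm_mult)
      also have "c * (cmod p * cmod (z - p')) powr (-2 * s) = c * cmod p powr (-2 * s) * cmod (z - p') powr (-2 * s)"
        by (simp add: powr_mult)
      finally show "Wgt s (b#bs) z = c * cmod p powr (-2 * s) * cmod (z - p') powr (-2 * s)" .
    qed
  qed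
qed

lemma powr_ratio:
  assumes "\<gamma> > 0" "s > 0" "Re p \<le> -\<gamma>" "Re z0 \<ge> 0" "Re z1 \<ge> 0"
  shows "cmod (z0 - p) powr (-2 * s) \<le> exp (2 * s / \<gamma> * cmod (z1 - z0)) * cmod (z1 - p) powr (-2 * s)"
proof -
  define a where "a = cmod (z0 - p)"
  define b where "b = cmod (z1 - p)"
  have ga: "\<gamma> \<le> a" using complex_Re_le_cmod[of "z0 - p"] assms by (simp add: a_def)
  have gb: "\<gamma> \<le> b" using complex_Re_le_cmod[of "z1 - p"] assms by (simp add: b_def)
  have tri: "b - a \<le> cmod (z1 - z0)"
    using norm_triangle_ineq2[of "z1 - p" "z0 - p"] unfolding a_def b_def by simp
  have "ln b - ln a = ln (b / a)" using ga gb assms by (simp add: ln_div)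
  also have "\<dots> \<le> b / a - 1" using ga gb assms by (intro ln_le_minus_one) auto
  also have "\<dots> = (b - a) / a" using ga assms by (simp add: field_simps)
  also have "\<dots> \<le> cmod (z1 - z0) / \<gamma>"
  proof (cases "b - a \<ge> 0")
    case True
    have "(b - a) / a \<le> (b - a) / \<gamma>" using True ga assms by (intro divide_left_mono) auto
    also have "\<dots> \<le> cmod (z1 - z0) / \<gamma>" using tri assms by (intro divide_right_mono) auto
    finally show ?thesis .
  next
    case False
    hence "(b - a) / a \<le> 0" using ga assms by (intro divide_nonpos_pos) auto
    also have "0 \<le> cmod (z1 - z0) / \<gamma>" using assms by simp
    finally show ?thesis .
  qed
  finally have key: "ln b - ln a \<le> cmod (z1 - z0) / \<gamma>" .
  have "-2 * s * ln a \<le> 2 * s / \<gamma> * cmod (z1 - z0) + -2 * s * ln b"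
  proof -
    have "2 * s * (ln b - ln a) \<le> 2 * s * (cmod (z1 - z0) / \<gamma>)"
      using key assms by (intro mult_left_mono) auto
    thus ?thesis by (simp add: algebra_simps)
  qed
  hence "exp (-2 * s * ln a) \<le> exp (2 * s / \<gamma> * cmod (z1 - z0)) * exp (-2 * s * ln b)"
    by (metis exp_add exp_le_cancel_iff)
  thus ?thesis using ga gb assms unfolding a_def[symmetric] b_def[symmetric]
    by (simp add: powr_def)
qed

lemma Wgt_ratio:
  assumes "\<forall>\<beta>\<in>B. Re \<beta> \<ge> \<gamma>" "\<gamma> \<ge> 1" "s > 0" "set bs \<subseteq> B" "Re z0 \<ge> 0" "Re z1 \<ge> 0"
  shows "Wgt s bs z0 \<le> exp (2 * s / \<gamma> * cmod (z1 - z0)) * Wgt s bs z1"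
proof (cases "bs = []")
  case True then show ?thesis using assms by simp
next
  case False
  then obtain c p where cp: "c > 0" "Re p \<le> -\<gamma>"
      "\<forall>z. Re z \<ge> 0 \<longrightarrow> Wgt s bs z = c * cmod (z - p) powr (-2 * s)"
    using Wt_rep[OF assms(1,2)] assms(4) by blast
  have "c * cmod (z0 - p) powr (-2 * s) \<le> c * (exp (2 * s / \<gamma> * cmod (z1 - z0)) * cmod (z1 - p) powr (-2 * s))"
    using powr_ratio[of \<gamma> s p z0 z1] assms cp by (intro mult_left_mono) auto
  thus ?thesis using cp assms by (simp add: mult.left_commute)
qed

lemma contract_G:
  assumes "\<forall>\<beta>\<in>B. Re \<beta> \<ge> \<gamma>" "\<gamma> \<ge> 1" "\<delta> > 0"
    and G: "\<forall>x. Re x \<ge> \<delta> \<and> cmod x \<le> 1 \<longrightarrow> (\<forall>b\<in>B. Re (inverse (x + b)) \<ge> \<delta> \<and> cmod (inverse (x + b)) \<le> 1)"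
  shows "Re x \<ge> \<delta> \<Longrightarrow> cmod x \<le> 1 \<Longrightarrow> Re y \<ge> \<delta> \<Longrightarrow> cmod y \<le> 1 \<Longrightarrow> set bs \<subseteq> B \<Longrightarrow>
     Re (thw bs x) \<ge> \<delta> \<and> cmod (thw bs x) \<le> 1 \<and>
     cmod (thw bs x - thw bs y) \<le> (1 / (1 + \<delta>)^2) ^ length bs * cmod (x - y)"
proof (induction bs arbitrary: x y)
  case Nil then show ?case by simp
next
  case (Cons b bs)
  have bB: "b \<in> B" using Cons.prems by simp
  have gx: "Re (x + b) \<ge> 1 + \<delta>" "Re (y + b) \<ge> 1 + \<delta>" using Cons.prems bB assms by auto
  have d: "cmod (inverse (x + b) - inverse (y + b)) \<le> cmod (x - y) / (1 + \<delta>)^2"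
    using inv_diff_le[OF gx] assms by simp
  have IH: "Re (thw bs (inverse (x + b))) \<ge> \<delta> \<and> cmod (thw bs (inverse (x + b))) \<le> 1 \<and>
     cmod (thw bs (inverse (x + b)) - thw bs (inverse (y + b))) \<le> (1 / (1 + \<delta>)^2) ^ length bs * cmod (inverse (x + b) - inverse (y + b))"
    using Cons.IH[of "inverse (x + b)" "inverse (y + b)"] G Cons.prems bB by auto
  have "(1 / (1 + \<delta>)^2) ^ length bs * cmod (inverse (x + b) - inverse (y + b))
      \<le> (1 / (1 + \<delta>)^2) ^ length bs * (cmod (x - y) / (1 + \<delta>)^2)"
    using d by (intro mult_left_mono) auto
  also have "\<dots> = (1 / (1 + \<delta>)^2) ^ length (b#bs) * cmod (x - y)" by (simp add: field_simps)
  finally show ?case using IH by simp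
qed

theorem corollary7p12:
  fixes B :: "complex set" and \<gamma> s lam :: real and m :: nat
    and H :: "complex set" and v :: "complex \<Rightarrow> real" and z0 z1 :: complex
  assumes "finite B" and "B \<noteq> {}" and "\<gamma> \<ge> 1" and "\<forall>\<beta>\<in>B. Re \<beta> \<ge> \<gamma>"
    and "s > 0"
    and "open H" and "bounded H" and "mildly_regular H"
    and "ball (complex_of_real (1 / (2 * \<gamma>))) (1 / (2 * \<gamma>)) \<subseteq> H"
    and "\<forall>z\<in>H. Re z > 0"
    and "m \<ge> 1" and "Cm_bar m H v" and "strictly_pos_bar H v"
    and "\<forall>z\<in>H. Lambda_op B s v z = lam * v z"
    and "z0 \<in> H" and "z1 \<in> H"
  shows "v z0 \<le> v z1 * exp ((sqrt 5 * s / \<gamma>) * cmod (z1 - z0))"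
proof -
  note Bg = assms(4) and g1 = assms(3) and disk = assms(9) and Hre = assms(10) and eig = assms(14)
  define Mb where "Mb = Max (cmod ` B)"
  have Mb: "\<And>b. b \<in> B \<Longrightarrow> cmod b \<le> Mb" unfolding Mb_def using assms(1) by auto
  have Mb0: "Mb \<ge> 0" using Mb assms(2) by (meson all_not_in_conv norm_ge_zero order_trans)
  define \<delta> where "\<delta> = 1 / (1 + Mb)^2"
  have d0: "\<delta> > 0" using Mb0 by (simp add: \<delta>_def)
  define q where "q = 1 / (1 + \<delta>)^2"
  have "1 < (1 + \<delta>)^2" using d0 by (intro one_less_power) auto
  hence q0: "q > 0" "q < 1" using d0 by (auto simp: q_def)
  have step1: "\<And>x b. Re x \<ge> 0 \<Longrightarrow> b \<in> B \<Longrightarrow> Re (inverse (x + b)) \<ge> 0 \<and> cmod (inverse (x + b)) \<le> 1"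
  proof -
    fix x b assume x: "Re x \<ge> 0" and b: "b \<in> B"
    have u: "Re (x + b) \<ge> \<gamma>" using x b Bg by auto
    have "Re (inverse (x + b)) > 0" using inv_re_pos[of "x+b"] u g1 by auto
    moreover have "cmod (inverse (x + b)) \<le> 1 / \<gamma>" using norm_inv_le[OF u] g1 by auto
    moreover have "1 / \<gamma> \<le> 1" using g1 by simp
    ultimately show "Re (inverse (x + b)) \<ge> 0 \<and> cmod (inverse (x + b)) \<le> 1" by auto
  qed
  have step2: "\<And>x b. Re x \<ge> 0 \<Longrightarrow> cmod x \<le> 1 \<Longrightarrow> b \<in> B \<Longrightarrow> Re (inverse (x + b)) \<ge> \<delta>"
  proof -
    fix x b assume x: "Re x \<ge> 0" "cmod x \<le> 1" and b: "b \<in> B"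
    define u where "u = x + b"
    have u1: "Re u \<ge> 1" using x b Bg g1 by (auto simp: u_def)
    have un: "cmod u \<le> 1 + Mb" using x Mb[OF b] norm_triangle_ineq[of x b] by (simp add: u_def)
    have un1: "cmod u \<ge> 1" using u1 complex_Re_le_cmod[of u] by linarith
    have "Re (inverse u) = Re u / (cmod u)^2" by (simp add: Re_inverse cmod_power2)
    also have "\<dots> \<ge> 1 / (cmod u)^2" using u1 un1 by (intro divide_right_mono) auto
    finally have a: "Re (inverse u) \<ge> 1 / (cmod u)^2" .
    have "(cmod u)^2 \<le> (1 + Mb)^2" using un un1 by (intro power_mono) auto
    moreover have "(cmod u)^2 > 0" using un1 by (intro zero_less_power) linarith
    ultimately have "1 / (1 + Mb)^2 \<le> 1 / (cmod u)^2"
      using Mb0 by (intro divide_left_mono mult_pos_pos) auto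
    thus "Re (inverse (x + b)) \<ge> \<delta>" using a by (simp add: \<delta>_def u_def)
  qed
  have Gp: "\<forall>x. Re x \<ge> \<delta> \<and> cmod x \<le> 1 \<longrightarrow> (\<forall>b\<in>B. Re (inverse (x + b)) \<ge> \<delta> \<and> cmod (inverse (x + b)) \<le> 1)"
    using step1 step2 d0 by (meson less_imp_le order_trans)
  obtain g where g: "continuous_on (closure H) g" "\<forall>z\<in>H. g z = v z" "\<forall>z\<in>closure H. g z > 0"
    using assms(13) unfolding strictly_pos_bar_def by blast
  have cpt: "compact (closure H)" using assms(7) by (simp add: compact_closure)
  have ne: "closure H \<noteq> {}" using assms(15) closure_subset by auto
  obtain zm where zm: "zm \<in> closure H" "\<forall>z\<in>closure H. g zm \<le> g z"
    using continuous_attains_inf[OF cpt ne g(1)] by blast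
  define c where "c = g zm"
  have c0: "c > 0" using zm g by (simp add: c_def)
  have vc: "\<And>z. z \<in> H \<Longrightarrow> v z \<ge> c"
  proof -
    fix z assume z: "z \<in> H"
    hence "z \<in> closure H" using closure_subset by blast
    hence "g zm \<le> g z" using zm(2) by blast
    thus "v z \<ge> c" using g(2) z by (simp add: c_def)
  qed
  have uc: "uniformly_continuous_on (closure H) g" using compact_uniformly_continuous[OF g(1) cpt] .
  have thH: "\<And>z bs. z \<in> H \<Longrightarrow> set bs \<subseteq> B \<Longrightarrow> thw bs z \<in> H"
    using thw_in[OF Bg g1 disk Hre] by blast
  have lam0: "lam > 0"
  proof -
    have "Lambda_op B s v z0 > 0"
      unfolding Lambda_op_def
    proof (rule sum_pos[OF assms(1) assms(2)])
      fix b assume b: "b \<in> B"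
      have u: "Re (z0 + b) > \<gamma>" using b Bg Hre assms(15) by force
      have "z0 + b \<noteq> 0"
      proof
        assume "z0 + b = 0" hence "Re (z0 + b) = 0" by simp
        with u g1 show False by simp
      qed
      moreover have "inverse (z0 + b) \<in> H" using inv_in_disk[of \<gamma> "z0+b"] u g1 disk by auto
      hence "v (inverse (z0 + b)) > 0" using vc c0 by (meson less_le_trans)
      ultimately show "0 < cmod (z0 + b) powr (-2 * s) * v (inverse (z0 + b))" by simp
    qed
    hence "lam * v z0 > 0" using eig assms(15) by simp
    moreover have "v z0 > 0" using vc[OF assms(15)] c0 by simp
    ultimately show ?thesis by (simp add: zero_less_mult_iff)
  qed
  define K where "K = exp (2 * s / \<gamma> * cmod (z1 - z0))"
  have K0: "K > 0" by (simp add: K_def)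
  have re0: "Re z0 \<ge> 0" "Re z1 \<ge> 0" using Hre assms(15,16) by (auto intro: less_imp_le)
  have v1: "v z1 > 0" using vc[OF assms(16)] c0 by simp
  have main: "v z0 \<le> K * v z1 * (1 + e / c)" if e: "e > 0" for e
  proof -
    obtain d where d: "d > 0" "\<forall>x\<in>closure H. \<forall>x'\<in>closure H. dist x' x < d \<longrightarrow> dist (g x') (g x) < e"
      using uc e unfolding uniformly_continuous_on_def by blast
    obtain n where n: "q ^ n < d / 2" using real_arch_pow_inv[of "d/2" q] d q0 by auto
    define N where "N = Suc (Suc n)"
    define W where "W = {bs. set bs \<subseteq> B \<and> length bs = N}"
    have close: "v (thw bs z0) \<le> v (thw bs z1) + e" if bs: "bs \<in> W" for bs
    proof -
      obtain b1 b2 bs' where bs': "bs = b1 # b2 # bs'" "length bs' = n"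
        using bs unfolding W_def N_def by (auto simp: length_Suc_conv)
      have sb: "b1 \<in> B" "b2 \<in> B" "set bs' \<subseteq> B" using bs bs' unfolding W_def by auto
      define x0 where "x0 = inverse (inverse (z0 + b1) + b2)"
      define x1 where "x1 = inverse (inverse (z1 + b1) + b2)"
      have y0: "Re (inverse (z0 + b1)) \<ge> 0" "cmod (inverse (z0 + b1)) \<le> 1" using step1 re0 sb by auto
      have y1: "Re (inverse (z1 + b1)) \<ge> 0" "cmod (inverse (z1 + b1)) \<le> 1" using step1 re0 sb by auto
      have X0: "Re x0 \<ge> \<delta>" "cmod x0 \<le> 1" using step1[OF y0(1) sb(2)] step2[OF y0 sb(2)] by (auto simp: x0_def)
      have X1: "Re x1 \<ge> \<delta>" "cmod x1 \<le> 1" using step1[OF y1(1) sb(2)] step2[OF y1 sb(2)] by (auto simp: x1_def)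
      have "cmod (thw bs' x0 - thw bs' x1) \<le> q ^ n * cmod (x0 - x1)"
        using contract_G[OF Bg g1 d0 Gp X0 X1 sb(3)] bs' by (simp add: q_def)
      also have "\<dots> \<le> q ^ n * 2"
      proof (intro mult_left_mono)
        show "cmod (x0 - x1) \<le> 2" using X0 X1 norm_triangle_ineq4[of x0 x1] by linarith
      qed (use q0 in simp)
      also have "\<dots> < d" using n by simp
      finally have dd: "dist (thw bs z0) (thw bs z1) < d" using bs' by (simp add: dist_norm x0_def x1_def)
      have sbs: "set bs \<subseteq> B" using bs unfolding W_def by auto
      have i0: "thw bs z0 \<in> H" "thw bs z1 \<in> H" using thH[OF assms(15) sbs] thH[OF assms(16) sbs] by auto
      hence "dist (g (thw bs z0)) (g (thw bs z1)) < e"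
        using d(2) dd closure_subset by blast
      thus ?thesis using i0 g(2) by (simp add: dist_real_def)
    qed
    have fW: "finite W" unfolding W_def using finite_lists_length_eq[OF assms(1)] by simp
    have sbW: "\<And>bs. bs \<in> W \<Longrightarrow> set bs \<subseteq> B" unfolding W_def by auto
    have E0: "lam ^ N * v z0 = (\<Sum>bs\<in>W. Wgt s bs z0 * v (thw bs z0))"
      unfolding W_def using eigen_iter[OF Bg g1 disk Hre eig assms(15)] .
    have E1: "lam ^ N * v z1 = (\<Sum>bs\<in>W. Wgt s bs z1 * v (thw bs z1))"
      unfolding W_def using eigen_iter[OF Bg g1 disk Hre eig assms(16)] .
    have "(\<Sum>bs\<in>W. Wgt s bs z0 * v (thw bs z0)) \<le> (\<Sum>bs\<in>W. K * Wgt s bs z1 * (v (thw bs z1) + e))"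
    proof (rule sum_mono)
      fix bs assume bs: "bs \<in> W"
      have p: "v (thw bs z0) \<ge> 0" using vc c0 thH sbW[OF bs] assms(15) by (meson less_imp_le order_trans)
      have "Wgt s bs z0 \<le> K * Wgt s bs z1"
        using Wgt_ratio[OF Bg g1 assms(5) sbW[OF bs] re0] by (simp add: K_def)
      thus "Wgt s bs z0 * v (thw bs z0) \<le> K * Wgt s bs z1 * (v (thw bs z1) + e)"
        using close[OF bs] p Wt_nonneg[of s bs z0] by (intro mult_mono) auto
    qed
    also have "\<dots> = K * (\<Sum>bs\<in>W. Wgt s bs z1 * v (thw bs z1)) + K * e * (\<Sum>bs\<in>W. Wgt s bs z1)"
      by (simp add: sum_distrib_left sum.distrib algebra_simps)
    also have "(\<Sum>bs\<in>W. Wgt s bs z1) \<le> (\<Sum>bs\<in>W. Wgt s bs z1 * v (thw bs z1)) / c"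
    proof -
      have "(\<Sum>bs\<in>W. Wgt s bs z1) = (\<Sum>bs\<in>W. Wgt s bs z1 * c) / c" using c0 by (simp add: sum_divide_distrib)
      also have "\<dots> \<le> (\<Sum>bs\<in>W. Wgt s bs z1 * v (thw bs z1)) / c"
        using c0 by (intro divide_right_mono sum_mono mult_left_mono vc thH assms(16) sbW Wt_nonneg) auto
      finally show ?thesis .
    qed
    hence "K * (\<Sum>bs\<in>W. Wgt s bs z1 * v (thw bs z1)) + K * e * (\<Sum>bs\<in>W. Wgt s bs z1)
       \<le> K * (\<Sum>bs\<in>W. Wgt s bs z1 * v (thw bs z1)) + K * e * ((\<Sum>bs\<in>W. Wgt s bs z1 * v (thw bs z1)) / c)"
      using K0 e by (intro add_left_mono mult_left_mono) auto
    finally have "lam ^ N * v z0 \<le> lam ^ N * (K * v z1 * (1 + e / c))"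
      using E0 E1 by (simp add: algebra_simps)
    thus ?thesis using lam0 by simp
  qed
  have "v z0 \<le> K * v z1"
  proof (rule field_le_epsilon)
    fix e :: real assume e: "e > 0"
    have "v z0 \<le> K * v z1 * (1 + (e * c / (K * v z1)) / c)"
      using main[of "e * c / (K * v z1)"] e c0 K0 v1 by simp
    also have "\<dots> = K * v z1 + e" using c0 K0 v1 by (simp add: field_simps)
    finally show "v z0 \<le> K * v z1 + e" .
  qed
  also have "K \<le> exp ((sqrt 5 * s / \<gamma>) * cmod (z1 - z0))"
  proof -
    have "2 \<le> sqrt 5" by (simp add: real_le_rsqrt)
    hence "2 * s / \<gamma> * cmod (z1 - z0) \<le> sqrt 5 * s / \<gamma> * cmod (z1 - z0)"
      using assms(5) g1 by (intro mult_right_mono divide_right_mono mult_right_mono) auto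
    thus ?thesis by (simp add: K_def)
  qed
  hence "K * v z1 \<le> exp ((sqrt 5 * s / \<gamma>) * cmod (z1 - z0)) * v z1" using v1 by simp
  finally show ?thesis by (simp add: mult.commute)
qed

end
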